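(* Let $\partial:L_1\to L_0$ be a crossed module of Lie algebras. (i) For each $c\in L_1$, $(\partial(c),\xi_c)\in\mathbf Z_0(L_* )$, where $\xi_c(t)=-t\cdot c$. (ii) The linear map $\delta:L_1\to\mathbf Z_0(L_* )$, $\delta(c)=(\partial(c),\xi_c)$, together with the bilinear map $\mathbf Z_0(L_* )\times\mathbf Z_0(L_* )\to L_1$, $\{(x,\xi),(y,\eta)\}:=\xi(y)$, satisfies, for all $a\in L_1$, $u,v,w\in\mathbf Z_0(L_* )$: $\{\delta a,u\}+\{u,\delta a\}=0$, $\delta\{u,u\}=0$ and $\{u,\delta\{v,w\}\}+\{w,\delta\{u,v\}\}+\{v,\delta\{w,u\}\}=0$; hence (with $[u,v]:=\delta\{u,v\}$ on $\mathbf Z_0(L_* )$ and $[a,b]:=\{\delta a,\delta b\}$ on $L_1$) it is a braided crossed module of Lie algebras, called the centre $\mathbf Z_*(L_* )$ of $L_*$.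
   Context: All vector spaces over a field $k$ of characteristic $\neq2$. A crossed module of Lie algebras is a Lie algebra homomorphism $\partial:L_1\to L_0$ with an action $(x,a)\mapsto x\cdot a$ of $L_0$ on the Lie algebra $L_1$ (i.e. $[x,y]\cdot a=x\cdot(y\cdot a)-y\cdot(x\cdot a)$, $x\cdot[a,b]=[x\cdot a,b]+[a,x\cdot b]$) such that $\partial(x\cdot a)=[x,\partial a]$ and $\partial(a)\cdot b=[a,b]$. $\mathbf Z_0(L_* )$ is the vector space (under componentwise operations) of pairs $(x,\xi)$ with $x\in L_0$ and $\xi:L_0\to L_1$ a linear map such that for all $s,t\in L_0$, $a\in L_1$: $\partial\xi(t)=[x,t]$; $\xi(\partial a)=x\cdot a$; $\xi([s,t])=s\cdot\xi(t)-t\cdot\xi(s)$. A braided crossed module of Lie algebras is a Lie algebra homomorphism $\partial:M_1\to M_0$ with a bilinear map $\{-,-\}:M_0\times M_0\to M_1$ such that $\partial\{x,y\}=[x,y]$, $\{\partial a,\partial b\}=[a,b]$, $\{\partial a,x\}+\{x,\partial a\}=0$, $\{x,[y,z]\}+\{z,[x,y]\}+\{y,[z,x]\}=0$. *)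

theory Defs
  imports Complex_Main "HOL-Library.Function_Algebras" "HOL-Library.Product_Plus"
begin

text \<open>Vector spaces over a field 'k are ambient types of class ab_group_add with a
scalar multiplication satisfying the vector_space locale of HOL.  Subspaces are
carrier sets.\<close>

definition lin_on ::
  "('k::field \<Rightarrow> 'a::ab_group_add \<Rightarrow> 'a) \<Rightarrow> ('k \<Rightarrow> 'b::ab_group_add \<Rightarrow> 'b) \<Rightarrow> 'a set \<Rightarrow> ('a \<Rightarrow> 'b) \<Rightarrow> bool" where
  "lin_on sa sb S f \<longleftrightarrow>
     (\<forall>x\<in>S. \<forall>y\<in>S. f (x + y) = f x + f y) \<and> (\<forall>c. \<forall>x\<in>S. f (sa c x) = sb c (f x))"

definition subspace_on :: "('k::field \<Rightarrow> 'a::ab_group_add \<Rightarrow> 'a) \<Rightarrow> 'a set \<Rightarrow> bool" where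
  "subspace_on sa S \<longleftrightarrow> 0 \<in> S \<and> (\<forall>x\<in>S. \<forall>y\<in>S. x + y \<in> S) \<and> (\<forall>c. \<forall>x\<in>S. sa c x \<in> S)"

definition lie_algebra_on ::
  "('k::field \<Rightarrow> 'a::ab_group_add \<Rightarrow> 'a) \<Rightarrow> 'a set \<Rightarrow> ('a \<Rightarrow> 'a \<Rightarrow> 'a) \<Rightarrow> bool" where
  "lie_algebra_on sa S br \<longleftrightarrow>
     vector_space sa \<and> subspace_on sa S \<and>
     (\<forall>x\<in>S. \<forall>y\<in>S. br x y \<in> S) \<and>
     (\<forall>x\<in>S. lin_on sa sa S (br x)) \<and> (\<forall>y\<in>S. lin_on sa sa S (\<lambda>x. br x y)) \<and>
     (\<forall>x\<in>S. br x x = 0) \<and>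
     (\<forall>x\<in>S. \<forall>y\<in>S. \<forall>z\<in>S. br x (br y z) + br y (br z x) + br z (br x y) = 0)"

definition lie_hom_on ::
  "('k::field \<Rightarrow> 'a::ab_group_add \<Rightarrow> 'a) \<Rightarrow> 'a set \<Rightarrow> ('a \<Rightarrow> 'a \<Rightarrow> 'a) \<Rightarrow>
   ('k \<Rightarrow> 'b::ab_group_add \<Rightarrow> 'b) \<Rightarrow> 'b set \<Rightarrow> ('b \<Rightarrow> 'b \<Rightarrow> 'b) \<Rightarrow> ('a \<Rightarrow> 'b) \<Rightarrow> bool" where
  "lie_hom_on sa A bra sb B brb f \<longleftrightarrow>
     (\<forall>x\<in>A. f x \<in> B) \<and> lin_on sa sb A f \<and> (\<forall>x\<in>A. \<forall>y\<in>A. f (bra x y) = brb (f x) (f y))"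

definition crossed_module ::
  "('k::field \<Rightarrow> 'a::ab_group_add \<Rightarrow> 'a) \<Rightarrow> ('a \<Rightarrow> 'a \<Rightarrow> 'a) \<Rightarrow>
   ('k \<Rightarrow> 'b::ab_group_add \<Rightarrow> 'b) \<Rightarrow> ('b \<Rightarrow> 'b \<Rightarrow> 'b) \<Rightarrow>
   ('b \<Rightarrow> 'a) \<Rightarrow> ('a \<Rightarrow> 'b \<Rightarrow> 'b) \<Rightarrow> bool" where
  "crossed_module s0 br0 s1 br1 d act \<longleftrightarrow>
     lie_algebra_on s0 UNIV br0 \<and> lie_algebra_on s1 UNIV br1 \<and>
     lie_hom_on s1 UNIV br1 s0 UNIV br0 d \<and>
     (\<forall>x. lin_on s1 s1 UNIV (act x)) \<and> (\<forall>a. lin_on s0 s1 UNIV (\<lambda>x. act x a)) \<and>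
     (\<forall>x y a. act (br0 x y) a = act x (act y a) - act y (act x a)) \<and>
     (\<forall>x a b. act x (br1 a b) = br1 (act x a) b + br1 a (act x b)) \<and>
     (\<forall>x a. d (act x a) = br0 x (d a)) \<and>
     (\<forall>a b. act (d a) b = br1 a b)"

definition Z0 ::
  "('k::field \<Rightarrow> 'a::ab_group_add \<Rightarrow> 'a) \<Rightarrow> ('a \<Rightarrow> 'a \<Rightarrow> 'a) \<Rightarrow>
   ('k \<Rightarrow> 'b::ab_group_add \<Rightarrow> 'b) \<Rightarrow> ('b \<Rightarrow> 'a) \<Rightarrow> ('a \<Rightarrow> 'b \<Rightarrow> 'b) \<Rightarrow> ('a \<times> ('a \<Rightarrow> 'b)) set" where
  "Z0 s0 br0 s1 d act = {(x, \<xi>). lin_on s0 s1 UNIV \<xi> \<and>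
      (\<forall>t. d (\<xi> t) = br0 x t) \<and> (\<forall>a. \<xi> (d a) = act x a) \<and>
      (\<forall>s t. \<xi> (br0 s t) = act s (\<xi> t) - act t (\<xi> s))}"

text \<open>Componentwise scalar multiplication on L0 \<times> (L0 \<Rightarrow> L1); addition is the
componentwise one from Product_Plus / Function_Algebras.\<close>
definition zscale :: "('k \<Rightarrow> 'a \<Rightarrow> 'a) \<Rightarrow> ('k \<Rightarrow> 'b \<Rightarrow> 'b) \<Rightarrow> 'k \<Rightarrow> 'a \<times> ('a \<Rightarrow> 'b) \<Rightarrow> 'a \<times> ('a \<Rightarrow> 'b)" where
  "zscale s0 s1 c u = (s0 c (fst u), \<lambda>t. s1 c (snd u t))"

definition zdelta :: "('b \<Rightarrow> 'a) \<Rightarrow> ('a \<Rightarrow> 'b \<Rightarrow> 'b::uminus) \<Rightarrow> 'b \<Rightarrow> 'a \<times> ('a \<Rightarrow> 'b)" where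
  "zdelta d act c = (d c, \<lambda>t. - act t c)"

definition zbrace :: "'a \<times> ('a \<Rightarrow> 'b) \<Rightarrow> 'a \<times> ('a \<Rightarrow> 'b) \<Rightarrow> 'b" where
  "zbrace u v = snd u (fst v)"

definition braided_crossed_module ::
  "('k::field \<Rightarrow> 'a::ab_group_add \<Rightarrow> 'a) \<Rightarrow> 'a set \<Rightarrow> ('a \<Rightarrow> 'a \<Rightarrow> 'a) \<Rightarrow>
   ('k \<Rightarrow> 'b::ab_group_add \<Rightarrow> 'b) \<Rightarrow> 'b set \<Rightarrow> ('b \<Rightarrow> 'b \<Rightarrow> 'b) \<Rightarrow>
   ('b \<Rightarrow> 'a) \<Rightarrow> ('a \<Rightarrow> 'a \<Rightarrow> 'b) \<Rightarrow> bool" where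
  "braided_crossed_module s0 M0 br0 s1 M1 br1 d brace \<longleftrightarrow>
     lie_algebra_on s0 M0 br0 \<and> lie_algebra_on s1 M1 br1 \<and>
     lie_hom_on s1 M1 br1 s0 M0 br0 d \<and>
     (\<forall>x\<in>M0. \<forall>y\<in>M0. brace x y \<in> M1) \<and>
     (\<forall>x\<in>M0. lin_on s0 s1 M0 (brace x)) \<and> (\<forall>y\<in>M0. lin_on s0 s1 M0 (\<lambda>x. brace x y)) \<and>
     (\<forall>x\<in>M0. \<forall>y\<in>M0. d (brace x y) = br0 x y) \<and>
     (\<forall>a\<in>M1. \<forall>b\<in>M1. brace (d a) (d b) = br1 a b) \<and>
     (\<forall>a\<in>M1. \<forall>x\<in>M0. brace (d a) x + brace x (d a) = 0) \<and>
     (\<forall>x\<in>M0. \<forall>y\<in>M0. \<forall>z\<in>M0. brace x (br0 y z) + brace z (br0 x y) + brace y (br0 z x) = 0)"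

end

theory Submission imports Defs begin

lemma lin_onD:
  assumes "lin_on sa sb UNIV f"
  shows "f (x+y) = f x + f y" "f (sa c x) = sb c (f x)" "f 0 = 0" "f (-x) = - f x"
    "f (x - y) = f x - f y"
proof -
  have add: "\<And>x y. f (x+y) = f x + f y" using assms by (simp add: lin_on_def)
  show "f (x+y) = f x + f y" by (rule add)
  show "f (sa c x) = sb c (f x)" using assms by (simp add: lin_on_def)
  have z: "f 0 = 0" using add[of 0 0] by simp
  show "f 0 = 0" by (rule z)
  have n: "\<And>x. f (-x) = - f x" proof -
    fix x have "f x + f (-x) = 0" using add[of x "-x"] z by simp
    then show "f (-x) = - f x" by (simp add: eq_neg_iff_add_eq_0 add.commute)
  qed
  show "f (-x) = - f x" by (rule n)
  show "f (x - y) = f x - f y" using add[of x "-y"] n[of y] by simp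
qed

locale cmod =
  fixes s0 :: "'k::field \<Rightarrow> 'a::ab_group_add \<Rightarrow> 'a" and br0 :: "'a \<Rightarrow> 'a \<Rightarrow> 'a"
    and s1 :: "'k \<Rightarrow> 'b::ab_group_add \<Rightarrow> 'b" and br1 :: "'b \<Rightarrow> 'b \<Rightarrow> 'b"
    and d :: "'b \<Rightarrow> 'a" and act :: "'a \<Rightarrow> 'b \<Rightarrow> 'b"
  assumes cm: "crossed_module s0 br0 s1 br1 d act"
begin

lemma la0: "lie_algebra_on s0 UNIV br0" and la1: "lie_algebra_on s1 UNIV br1"
  using cm by (auto simp: crossed_module_def)

sublocale v0: vector_space s0 using la0 by (simp add: lie_algebra_on_def)
sublocale v1: vector_space s1 using la1 by (simp add: lie_algebra_on_def)

lemma linb0r: "lin_on s0 s0 UNIV (br0 x)" and linb0l: "lin_on s0 s0 UNIV (\<lambda>x. br0 x y)"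
  and linb1r: "lin_on s1 s1 UNIV (br1 a)" and linb1l: "lin_on s1 s1 UNIV (\<lambda>a. br1 a b)"
  using la0 la1 by (auto simp: lie_algebra_on_def)

lemma lind: "lin_on s1 s0 UNIV d" and dhom: "d (br1 a b) = br0 (d a) (d b)"
  using cm by (auto simp: crossed_module_def lie_hom_on_def)

lemma linactr: "lin_on s1 s1 UNIV (act x)" and linactl: "lin_on s0 s1 UNIV (\<lambda>x. act x a)"
  using cm by (auto simp: crossed_module_def)

lemma act_br0: "act (br0 x y) a = act x (act y a) - act y (act x a)"
  and act_br1: "act x (br1 a b) = br1 (act x a) b + br1 a (act x b)"
  and d_act: "d (act x a) = br0 x (d a)"
  and act_d: "act (d a) b = br1 a b"
  using cm by (auto simp: crossed_module_def)

lemma br0_alt: "br0 x x = 0" and br1_alt: "br1 a a = 0"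
  using la0 la1 by (auto simp: lie_algebra_on_def)

lemmas b0r = lin_onD[OF linb0r] and b0l = lin_onD[OF linb0l]
  and b1r = lin_onD[OF linb1r] and b1l = lin_onD[OF linb1l]
  and dl = lin_onD[OF lind] and ar = lin_onD[OF linactr] and al = lin_onD[OF linactl]

lemma br0_anti: "br0 y x = - br0 x y"
proof -
  have "br0 (x+y) (x+y) = 0" by (rule br0_alt)
  moreover have "br0 (x+y) (x+y) = br0 x x + br0 y x + (br0 x y + br0 y y)"
    by (simp add: b0l b0r)
  ultimately have "br0 x y + br0 y x = 0" by (simp add: br0_alt add.commute)
  then show ?thesis by (simp add: eq_neg_iff_add_eq_0 add.commute)
qed

lemma br1_anti: "br1 b a = - br1 a b"
proof -
  have "br1 (a+b) (a+b) = 0" by (rule br1_alt)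
  moreover have "br1 (a+b) (a+b) = br1 a a + br1 b a + (br1 a b + br1 b b)"
    by (simp add: b1l b1r)
  ultimately have "br1 a b + br1 b a = 0" by (simp add: br1_alt add.commute)
  then show ?thesis by (simp add: eq_neg_iff_add_eq_0 add.commute)
qed

abbreviation "Z \<equiv> Z0 s0 br0 s1 d act"
abbreviation "\<delta> \<equiv> zdelta d act"

lemma inZ: "(x,\<xi>) \<in> Z \<longleftrightarrow> lin_on s0 s1 UNIV \<xi> \<and> (\<forall>t. d (\<xi> t) = br0 x t) \<and> (\<forall>a. \<xi> (d a) = act x a)
   \<and> (\<forall>s t. \<xi> (br0 s t) = act s (\<xi> t) - act t (\<xi> s))"
  by (simp add: Z0_def)

lemma ZD: assumes "(x,\<xi>) \<in> Z"
  shows "d (\<xi> t) = br0 x t" "\<xi> (d a) = act x a" "\<xi> (br0 s t) = act s (\<xi> t) - act t (\<xi> s)"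
    "lin_on s0 s1 UNIV \<xi>"
  using assms by (auto simp: inZ)

lemma delta_in: "(d c, \<lambda>t. - act t c) \<in> Z"
  unfolding inZ
proof (intro conjI allI)
  show "lin_on s0 s1 UNIV (\<lambda>t. - act t c)"
    by (simp add: lin_on_def al)
  fix t show "d (- act t c) = br0 (d c) t" by (simp add: dl d_act br0_anti[of t "d c"])
next
  fix a show "- act (d a) c = act (d c) a" by (simp add: act_d br1_anti[of c a])
next
  fix s t show "- act (br0 s t) c = act s (- act t c) - act t (- act s c)"
    by (simp add: act_br0 ar)
qed

lemma delta_in': "\<delta> c \<in> Z" by (simp add: zdelta_def delta_in)

lemma Z_zero: "0 \<in> Z"
proof -
  have "(0, \<lambda>t. 0) \<in> Z" unfolding inZ
    by (simp add: lin_on_def dl al ar b0l)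
  then show ?thesis by (simp add: zero_prod_def zero_fun_def)
qed

lemma Z_add: assumes "(x,\<xi>) \<in> Z" "(y,\<eta>) \<in> Z" shows "(x,\<xi>) + (y,\<eta>) \<in> Z"
proof -
  note A = ZD[OF assms(1)] and B = ZD[OF assms(2)]
  note LA = lin_onD[OF A(4)] and LB = lin_onD[OF B(4)]
  have "(x+y, \<lambda>t. \<xi> t + \<eta> t) \<in> Z" unfolding inZ
  proof (intro conjI allI)
    show "lin_on s0 s1 UNIV (\<lambda>t. \<xi> t + \<eta> t)"
      by (simp add: lin_on_def LA LB v1.scale_right_distrib add_ac)
    fix t show "d (\<xi> t + \<eta> t) = br0 (x + y) t" by (simp add: dl A B b0l)
  next
    fix a show "\<xi> (d a) + \<eta> (d a) = act (x + y) a" by (simp add: A B al)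
  next
    fix s t show "\<xi> (br0 s t) + \<eta> (br0 s t) = act s (\<xi> t + \<eta> t) - act t (\<xi> s + \<eta> s)"
      by (simp add: A B ar algebra_simps)
  qed
  then show ?thesis by (simp add: plus_fun_def)
qed

lemma Z_scale: assumes "(x,\<xi>) \<in> Z" shows "zscale s0 s1 c (x,\<xi>) \<in> Z"
proof -
  note A = ZD[OF assms(1)]
  note LA = lin_onD[OF A(4)]
  have "(s0 c x, \<lambda>t. s1 c (\<xi> t)) \<in> Z" unfolding inZ
  proof (intro conjI allI)
    show "lin_on s0 s1 UNIV (\<lambda>t. s1 c (\<xi> t))"
      by (simp add: lin_on_def LA v1.scale_right_distrib v1.scale_scale mult.commute)
    fix t show "d (s1 c (\<xi> t)) = br0 (s0 c x) t" by (simp add: dl A b0l)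
  next
    fix a show "s1 c (\<xi> (d a)) = act (s0 c x) a" by (simp add: A al)
  next
    fix s t show "s1 c (\<xi> (br0 s t)) = act s (s1 c (\<xi> t)) - act t (s1 c (\<xi> s))"
      by (simp add: A ar v1.scale_right_diff_distrib)
  qed
  then show ?thesis by (simp add: zscale_def)
qed

lemma Z_add': "u \<in> Z \<Longrightarrow> v \<in> Z \<Longrightarrow> u + v \<in> Z"
  using Z_add by (cases u, cases v) auto
lemma Z_scale': "u \<in> Z \<Longrightarrow> zscale s0 s1 c u \<in> Z"
  using Z_scale by (cases u) auto

lemma delta_lin: "lin_on s1 (zscale s0 s1) UNIV \<delta>"
  by (simp add: lin_on_def zdelta_def zscale_def dl ar fun_eq_iff v1.scale_minus_right)

lemmas deltaL = lin_onD[OF delta_lin]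

lemma brace_lin_r: assumes "u \<in> Z" shows "lin_on (zscale s0 s1) s1 Z (zbrace u)"
proof -
  obtain x \<xi> where u: "u = (x,\<xi>)" by (cases u)
  note L = lin_onD[OF ZD(4)[OF assms[unfolded u]]]
  show ?thesis by (simp add: lin_on_def zbrace_def u zscale_def L)
qed

lemma brace_lin_l: "lin_on (zscale s0 s1) s1 Z (\<lambda>u. zbrace u v)"
  by (simp add: lin_on_def zbrace_def zscale_def)

lemma brace_sym: assumes "u \<in> Z" shows "zbrace (\<delta> a) u + zbrace u (\<delta> a) = 0"
proof -
  obtain x \<xi> where u: "u = (x,\<xi>)" by (cases u)
  show ?thesis using ZD[OF assms[unfolded u]] by (simp add: zbrace_def zdelta_def u)
qed

lemma brace_alt: assumes "u \<in> Z" shows "\<delta> (zbrace u u) = 0"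
proof -
  obtain x \<xi> where u: "u = (x,\<xi>)" by (cases u)
  note A = ZD[OF assms[unfolded u]]
  have "\<And>t. act t (\<xi> x) = 0"
  proof -
    fix t
    have "\<xi> (br0 x t) = act x (\<xi> t) - act t (\<xi> x)" by (rule A(3))
    moreover have "\<xi> (br0 x t) = act x (\<xi> t)" using A(1)[of t, symmetric] A(2)[of "\<xi> t"] by simp
    ultimately show "act t (\<xi> x) = 0" by simp
  qed
  then show ?thesis using A(1)[of x] by (simp add: zbrace_def zdelta_def u br0_alt zero_prod_def zero_fun_def)
qed

lemma brace_jac: assumes "u \<in> Z" "v \<in> Z" "w \<in> Z"
  shows "zbrace u (\<delta> (zbrace v w)) + zbrace w (\<delta> (zbrace u v)) + zbrace v (\<delta> (zbrace w u)) = 0"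
proof -
  obtain x \<xi> where u: "u = (x,\<xi>)" by (cases u)
  obtain y \<eta> where v: "v = (y,\<eta>)" by (cases v)
  obtain z \<zeta> where w: "w = (z,\<zeta>)" by (cases w)
  note A = ZD[OF assms(1)[unfolded u]] and B = ZD[OF assms(2)[unfolded v]]
    and C = ZD[OF assms(3)[unfolded w]]
  note LB = lin_onD[OF B(4)]
  have e1: "zbrace u (\<delta> (zbrace v w)) = \<eta> (br0 x z) - \<zeta> (br0 x y)"
  proof -
    have "zbrace u (\<delta> (zbrace v w)) = \<xi> (br0 y z)"
      by (simp add: zbrace_def zdelta_def u v w B(1))
    also have "\<dots> = act y (\<xi> z) - act z (\<xi> y)" by (rule A(3))
    also have "act y (\<xi> z) = \<eta> (br0 x z)" using B(2)[of "\<xi> z"] A(1)[of z] by simp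
    also have "act z (\<xi> y) = \<zeta> (br0 x y)" using C(2)[of "\<xi> y"] A(1)[of y] by simp
    finally show ?thesis .
  qed
  have e2: "zbrace w (\<delta> (zbrace u v)) = \<zeta> (br0 x y)"
    by (simp add: zbrace_def zdelta_def u v w A(1))
  have e3: "zbrace v (\<delta> (zbrace w u)) = - \<eta> (br0 x z)"
    by (simp add: zbrace_def zdelta_def u v w C(1) br0_anti[of z x] LB)
  show ?thesis by (simp add: e1 e2 e3)
qed

lemma br1_eq: "(\<lambda>a b. zbrace (\<delta> a) (\<delta> b)) = br1"
proof (intro ext)
  fix a b
  have "zbrace (\<delta> a) (\<delta> b) = - br1 b a" by (simp add: zbrace_def zdelta_def act_d)
  also have "\<dots> = br1 a b" using br1_anti[of a b] by simp
  finally show "zbrace (\<delta> a) (\<delta> b) = br1 a b" .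
qed

lemma br1_pt: "zbrace (\<delta> a) (\<delta> b) = br1 a b"
  using br1_eq by metis

lemma comp_lin: "lin_on sa sb S f \<Longrightarrow> lin_on sb sc UNIV g \<Longrightarrow> lin_on sa sc S (\<lambda>x. g (f x))"
  by (simp add: lin_on_def)

lemma zvs: "vector_space (zscale s0 s1)"
  by unfold_locales (auto simp: zscale_def fun_eq_iff v0.scale_right_distrib v1.scale_right_distrib
     v0.scale_left_distrib v1.scale_left_distrib v0.scale_scale v1.scale_scale)

lemma braided: "braided_crossed_module (zscale s0 s1) Z (\<lambda>u v. \<delta> (zbrace u v))
        s1 UNIV (\<lambda>a b. zbrace (\<delta> a) (\<delta> b)) \<delta> zbrace"
  unfolding braided_crossed_module_def br1_eq
proof (intro conjI ballI)
  show "lie_algebra_on s1 UNIV br1" by (rule la1)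
  show "lie_hom_on s1 UNIV br1 (zscale s0 s1) Z (\<lambda>u v. \<delta> (zbrace u v)) \<delta>"
    unfolding lie_hom_on_def br1_eq[symmetric] using delta_in' delta_lin by auto
  show "lie_algebra_on (zscale s0 s1) Z (\<lambda>u v. \<delta> (zbrace u v))"
    unfolding lie_algebra_on_def subspace_on_def
  proof (intro conjI ballI allI)
    show "vector_space (zscale s0 s1)" by (rule zvs)
    show "0 \<in> Z" by (rule Z_zero)
    fix x assume x: "x \<in> Z"
    show "\<delta> (zbrace x x) = 0" using brace_alt[OF x] .
    show "lin_on (zscale s0 s1) (zscale s0 s1) Z (\<lambda>y. \<delta> (zbrace x y))"
      by (rule comp_lin[OF brace_lin_r[OF x] delta_lin])
    show "lin_on (zscale s0 s1) (zscale s0 s1) Z (\<lambda>y. \<delta> (zbrace y x))"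
      by (rule comp_lin[OF brace_lin_l delta_lin])
    fix c show "zscale s0 s1 c x \<in> Z" by (rule Z_scale'[OF x])
  next
    fix x y assume "x \<in> Z" "y \<in> Z"
    then show "x + y \<in> Z" by (rule Z_add')
  next
    fix x y show "\<delta> (zbrace x y) \<in> Z" by (rule delta_in')
  next
    fix x y z assume x: "x \<in> Z" and y: "y \<in> Z" and z: "z \<in> Z"
    have "\<delta> (zbrace x (\<delta> (zbrace y z)) + zbrace z (\<delta> (zbrace x y)) + zbrace y (\<delta> (zbrace z x))) = 0"
      using brace_jac[OF x y z] deltaL(3) by simp
    then show "\<delta> (zbrace x (\<delta> (zbrace y z))) + \<delta> (zbrace y (\<delta> (zbrace z x))) + \<delta> (zbrace z (\<delta> (zbrace x y))) = 0"
      by (simp add: deltaL(1) add_ac)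
  qed
next
  fix x assume "x \<in> Z" then show "lin_on (zscale s0 s1) s1 Z (zbrace x)" by (rule brace_lin_r)
next
  fix y show "lin_on (zscale s0 s1) s1 Z (\<lambda>x. zbrace x y)" by (rule brace_lin_l)
next
  fix a x assume "x \<in> Z" then show "zbrace (\<delta> a) x + zbrace x (\<delta> a) = 0" by (rule brace_sym)
next
  fix x y z assume "x \<in> Z" "y \<in> Z" "z \<in> Z"
  then show "zbrace x (\<delta> (zbrace y z)) + zbrace z (\<delta> (zbrace x y)) + zbrace y (\<delta> (zbrace z x)) = 0"
    by (rule brace_jac)
qed (auto simp: br1_pt)

lemma main:
  shows "(\<forall>c. (d c, (\<lambda>t. - act t c)) \<in> Z)
    \<and> (\<forall>c. \<delta> c \<in> Z) \<and> lin_on s1 (zscale s0 s1) UNIV \<delta>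
    \<and> (\<forall>u\<in>Z. lin_on (zscale s0 s1) s1 Z (zbrace u)) \<and> (\<forall>v\<in>Z. lin_on (zscale s0 s1) s1 Z (\<lambda>u. zbrace u v))
    \<and> (\<forall>a. \<forall>u\<in>Z. zbrace (\<delta> a) u + zbrace u (\<delta> a) = 0)
    \<and> (\<forall>u\<in>Z. \<delta> (zbrace u u) = 0)
    \<and> (\<forall>u\<in>Z. \<forall>v\<in>Z. \<forall>w\<in>Z.
         zbrace u (\<delta> (zbrace v w)) + zbrace w (\<delta> (zbrace u v)) + zbrace v (\<delta> (zbrace w u)) = 0)
    \<and> braided_crossed_module (zscale s0 s1) Z (\<lambda>u v. \<delta> (zbrace u v))
        s1 UNIV (\<lambda>a b. zbrace (\<delta> a) (\<delta> b)) \<delta> zbrace"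
  using delta_in delta_in' delta_lin brace_lin_r brace_lin_l brace_sym brace_alt brace_jac braided
  by blast

end

theorem theorem4p3:
  fixes s0 :: "'k::field \<Rightarrow> 'a::ab_group_add \<Rightarrow> 'a" and br0 :: "'a \<Rightarrow> 'a \<Rightarrow> 'a"
    and s1 :: "'k \<Rightarrow> 'b::ab_group_add \<Rightarrow> 'b" and br1 :: "'b \<Rightarrow> 'b \<Rightarrow> 'b"
    and d :: "'b \<Rightarrow> 'a" and act :: "'a \<Rightarrow> 'b \<Rightarrow> 'b"
  assumes char: "(2::'k) \<noteq> 0"
    and cm: "crossed_module s0 br0 s1 br1 d act"
  defines "Z \<equiv> Z0 s0 br0 s1 d act"
    and "\<delta> \<equiv> zdelta d act"
  shows "(\<forall>c. (d c, (\<lambda>t. - act t c)) \<in> Z)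
    \<and> (\<forall>c. \<delta> c \<in> Z) \<and> lin_on s1 (zscale s0 s1) UNIV \<delta>
    \<and> (\<forall>u\<in>Z. lin_on (zscale s0 s1) s1 Z (zbrace u)) \<and> (\<forall>v\<in>Z. lin_on (zscale s0 s1) s1 Z (\<lambda>u. zbrace u v))
    \<and> (\<forall>a. \<forall>u\<in>Z. zbrace (\<delta> a) u + zbrace u (\<delta> a) = 0)
    \<and> (\<forall>u\<in>Z. \<delta> (zbrace u u) = 0)
    \<and> (\<forall>u\<in>Z. \<forall>v\<in>Z. \<forall>w\<in>Z.
         zbrace u (\<delta> (zbrace v w)) + zbrace w (\<delta> (zbrace u v)) + zbrace v (\<delta> (zbrace w u)) = 0)
    \<and> braided_crossed_module (zscale s0 s1) Z (\<lambda>u v. \<delta> (zbrace u v))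
        s1 UNIV (\<lambda>a b. zbrace (\<delta> a) (\<delta> b)) \<delta> zbrace"
  unfolding assms(3,4) using cmod.main[OF cmod.intro[OF cm]] .

end
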